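(* Let $\mathbb{T}\colon\mathbb{R}^d\to\mathbb{R}^d$ be nonexpansive and let $y_\star\in\mathrm{Fix}\,\mathbb{T}$. Let $N\ge 1$ be an integer, let $y_0\in\mathbb{R}^d$, set $\mathbb{T}y_{-1}:=y_0$, and define \[ y_{k+1} = y_k + \frac{N-k-1}{N-k}\left(\mathbb{T}y_k - \mathbb{T}y_{k-1}\right), \qquad k=0,1,\dots,N-2 \] (the Dual Optimal Halpern Method, Dual-OHM). Then \[ \|y_{N-1} - \mathbb{T}y_{N-1}\|^2 \le \frac{4\|y_0 - y_\star\|^2}{N^2}. \]
   Context: $\mathbb{T}$ is nonexpansive if $\|\mathbb{T}x-\mathbb{T}y\|\le\|x-y\|$ for all $x,y$. $\mathrm{Fix}\,\mathbb{T}=\{y:\ y=\mathbb{T}y\}$. *)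

theory Defs
  imports "HOL-Analysis.Analysis"
begin

definition nonexpansive :: "('a::real_normed_vector \<Rightarrow> 'a) \<Rightarrow> bool" where
  "nonexpansive T \<longleftrightarrow> (\<forall>x y. norm (T x - T y) \<le> norm (x - y))"

definition Fix :: "('a \<Rightarrow> 'a) \<Rightarrow> 'a set" where
  "Fix T = {y. y = T y}"

text \<open>Dual-OHM iterates. The convention T y_{-1} := y0 is built into the step
  for k = 0: y_1 = y_0 + (N-1)/N (T y_0 - y_0). For k \<ge> 1,
  y_{k+1} = y_k + (N-k-1)/(N-k) (T y_k - T y_{k-1}).\<close>
fun dual_ohm :: "('a::real_normed_vector \<Rightarrow> 'a) \<Rightarrow> nat \<Rightarrow> 'a \<Rightarrow> nat \<Rightarrow> 'a" where
  "dual_ohm T N y0 0 = y0"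
| "dual_ohm T N y0 (Suc 0) =
     y0 + ((real N - 1) / real N) *\<^sub>R (T y0 - y0)"
| "dual_ohm T N y0 (Suc (Suc k)) =
     dual_ohm T N y0 (Suc k)
     + ((real N - real (Suc k) - 1) / (real N - real (Suc k))) *\<^sub>R
         (T (dual_ohm T N y0 (Suc k)) - T (dual_ohm T N y0 k))"

end

theory Submission
  imports Defs
begin

lemma real_core:
  fixes aa bb dd ab ad bd h :: real
  assumes "h > 1"
  shows "(1/(h-1))*((aa - 2*((h-1)/h)*ad + ((h-1)/h)^2*dd) - (bb - 2*bd + dd)) + (bb + aa + (1/h)^2*dd - 2*ab - 2*(1/h)*bd + 2*(1/h)*ad)
   = (1/h)*(aa - bb) + (bb - 2*ab + aa) + (1/(h*(h-1)))*(aa - (bb - 2*bd + dd))"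
proof -
  have h0: "h \<noteq> 0" "h - 1 \<noteq> 0" using assms by auto
  show ?thesis using h0 by (simp add: field_simps) algebra
qed
lemma step_core:
  fixes a b d :: "'a::real_inner" and h :: real
  assumes "h > 1"
  shows "(1/(h-1))*((norm (a - ((h-1)/h) *\<^sub>R d))\<^sup>2 - (norm(b-d))\<^sup>2) + (norm (b - a - (1/h) *\<^sub>R d))\<^sup>2
   = (1/h)*((norm a)\<^sup>2 - (norm b)\<^sup>2) + (norm (b-a))\<^sup>2 + (1/(h*(h-1)))*((norm a)\<^sup>2 - (norm(b-d))\<^sup>2)"
proof -
  have e1: "(norm (a - c *\<^sub>R d))\<^sup>2 = a\<bullet>a - 2*c*(a\<bullet>d) + c^2*(d\<bullet>d)" for c
    unfolding power2_norm_eq_inner by (simp add: inner_diff_left inner_diff_right inner_commute[of d a] power2_eq_square algebra_simps)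
  have e2: "(norm (b - d))\<^sup>2 = b\<bullet>b - 2*(b\<bullet>d) + d\<bullet>d"
    unfolding power2_norm_eq_inner by (simp add: inner_diff_left inner_diff_right inner_commute[of d b])
  have e3: "(norm (b - a - c *\<^sub>R d))\<^sup>2 = b\<bullet>b + a\<bullet>a + c^2*(d\<bullet>d) - 2*(a\<bullet>b) - 2*c*(b\<bullet>d) + 2*c*(a\<bullet>d)" for c
    unfolding power2_norm_eq_inner by (simp add: inner_diff_left inner_diff_right inner_commute[of d a] inner_commute[of d b] inner_commute[of b a] power2_eq_square algebra_simps)
  have e4: "(norm (b - a))\<^sup>2 = b\<bullet>b - 2*(a\<bullet>b) + a\<bullet>a"
    unfolding power2_norm_eq_inner by (simp add: inner_diff_left inner_diff_right inner_commute[of b a])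
  have e5: "(norm a)\<^sup>2 = a\<bullet>a" "(norm b)\<^sup>2 = b\<bullet>b" by (simp_all add: power2_norm_eq_inner)
  show ?thesis unfolding e1 e2 e3 e4 e5 by (rule real_core[OF assms])
qed

lemma norm_diff_sq:
  fixes v w :: "'a::real_inner"
  shows "(norm (v - w))\<^sup>2 = (norm v)\<^sup>2 - 2 * (v \<bullet> w) + (norm w)\<^sup>2"
  unfolding power2_norm_eq_inner
  by (simp add: inner_diff_left inner_diff_right inner_commute[of w v])

theorem theorem3p3:
  fixes T :: "real ^ 'd \<Rightarrow> real ^ 'd" and y0 ystar :: "real ^ 'd" and N :: nat
  assumes "nonexpansive T"
    and "ystar \<in> Fix T"
    and "N \<ge> 1"
  shows "(norm (dual_ohm T N y0 (N - 1) - T (dual_ohm T N y0 (N - 1))))\<^sup>2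
           \<le> 4 * (norm (y0 - ystar))\<^sup>2 / (real N)\<^sup>2"
proof -
  have ne: "norm (T v - T w) \<le> norm (v - w)" for v w
    using assms(1) unfolding nonexpansive_def by blast
  have fx: "T ystar = ystar" using assms(2) unfolding Fix_def by auto
  define y where "y = dual_ohm T N y0"
  define p where "p k = (if k = 0 then y0 else T (y (k-1)))" for k
  have rec: "y (Suc k) = y k + ((real N - real k - 1)/(real N - real k)) *\<^sub>R (T (y k) - p k)" for k
  proof (cases k)
    case 0 then show ?thesis by (simp add: y_def p_def)
  next
    case (Suc j) then show ?thesis by (simp add: y_def p_def)
  qed
  define x where "x = y (N - 1)"
  define u where "u = T x"
  define Q where "Q m = (1/real N)*((norm (u - y0))\<^sup>2 - (norm (x - y0))\<^sup>2)
      + (1/(real N - real m))*((norm (x - y m))\<^sup>2 - (norm (u - p m))\<^sup>2)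
      + (norm (y m - p m - (x - u)))\<^sup>2 - (norm (x - u))\<^sup>2" for m
  have Qpos: "m \<le> N - 1 \<Longrightarrow> Q m \<ge> 0" for m
  proof (induction m)
    case 0
    have "Q 0 = 0" by (simp add: Q_def y_def p_def norm_minus_commute algebra_simps)
    then show ?case by simp
  next
    case (Suc m)
    define h where "h = real N - real m"
    have h1: "h > 1" using Suc.prems unfolding h_def by linarith
    define a where "a = x - y m"
    define b where "b = u - p m"
    define d where "d = T (y m) - p m"
    have c: "(real N - real m - 1)/(real N - real m) = (h-1)/h" by (simp add: h_def)
    have ys: "y (Suc m) = y m + ((h-1)/h) *\<^sub>R d" using rec[of m] c by (simp add: d_def)
    have A: "x - y (Suc m) = a - ((h-1)/h) *\<^sub>R d" by (simp add: ys a_def algebra_simps)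
    have B: "u - p (Suc m) = b - d" by (simp add: b_def d_def p_def)
    have sc: "(1/h) *\<^sub>R d = d - ((h-1)/h) *\<^sub>R d"
    proof -
      have "1/h = 1 - (h-1)/h" using h1 by (simp add: field_simps)
      then show ?thesis by (simp add: scaleR_diff_left)
    qed
    have C: "y (Suc m) - p (Suc m) - (x - u) = b - a - (1/h) *\<^sub>R d"
      unfolding sc by (simp add: ys a_def b_def d_def p_def algebra_simps)
    have D: "y m - p m - (x - u) = b - a" by (simp add: a_def b_def algebra_simps)
    have hh: "real N - real (Suc m) = h - 1" by (simp add: h_def)
    note core = step_core[OF h1, where a=a and b=b and d=d]
    have nn: "(norm a)\<^sup>2 - (norm (b - d))\<^sup>2 \<ge> 0"
    proof -
      have "b - d = T x - T (y m)" by (simp add: b_def d_def u_def)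
      then have "norm (b - d) \<le> norm a" using ne[of x "y m"] by (simp add: a_def)
      then have "(norm (b - d))\<^sup>2 \<le> (norm a)\<^sup>2" by (rule power_mono) simp
      then show ?thesis by linarith
    qed
    have w: "1/(h*(h-1)) \<ge> 0" using h1 by simp
    have Q1: "Q (Suc m) = (1/real N)*((norm (u - y0))\<^sup>2 - (norm (x - y0))\<^sup>2)
       + ((1/(h-1))*((norm (a - ((h-1)/h) *\<^sub>R d))\<^sup>2 - (norm(b-d))\<^sup>2) + (norm (b - a - (1/h) *\<^sub>R d))\<^sup>2)
       - (norm (x - u))\<^sup>2"
      unfolding Q_def hh A B C by simp
    have Q0: "Q m = (1/real N)*((norm (u - y0))\<^sup>2 - (norm (x - y0))\<^sup>2)
       + ((1/h)*((norm a)\<^sup>2 - (norm b)\<^sup>2) + (norm (b-a))\<^sup>2) - (norm (x - u))\<^sup>2"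
      unfolding Q_def D by (simp add: h_def a_def b_def)
    have "Q (Suc m) = Q m + (1/(h*(h-1)))*((norm a)\<^sup>2 - (norm (b - d))\<^sup>2)"
      unfolding Q1 Q0 core by simp
    moreover have "Q m \<ge> 0" using Suc by simp
    ultimately show ?case using w nn by simp
  qed
  have "Q (N - 1) = (1/real N)*((norm (u - y0))\<^sup>2 - (norm (x - y0))\<^sup>2) - (norm (x - u))\<^sup>2"
  proof -
    have "real N - real (N - 1) = 1" using assms(3) by simp
    moreover have "x - p (N - 1) - (x - u) = u - p (N - 1)" by (simp add: algebra_simps)
    ultimately show ?thesis unfolding Q_def x_def[symmetric] by simp
  qed
  with Qpos[of "N - 1"] have q0: "(norm (x - u))\<^sup>2 \<le> (1/real N)*((norm (u - y0))\<^sup>2 - (norm (x - y0))\<^sup>2)"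
    by simp
  have Npos: "real N > 0" using assms(3) by simp
  have q: "real N * (norm (x - u))\<^sup>2 \<le> (norm (u - y0))\<^sup>2 - (norm (x - y0))\<^sup>2"
  proof -
    have "real N * (norm (x - u))\<^sup>2 \<le> real N * ((1/real N)*((norm (u - y0))\<^sup>2 - (norm (x - y0))\<^sup>2))"
      using q0 Npos by (rule mult_left_mono[OF _ less_imp_le])
    also have "\<dots> = (norm (u - y0))\<^sup>2 - (norm (x - y0))\<^sup>2" using Npos by simp
    finally show ?thesis .
  qed
  define g where "g = x - u"
  define a where "a = y0 - ystar"
  have e1: "(norm (u - y0))\<^sup>2 = (norm (x - y0))\<^sup>2 - 2 * ((x - y0) \<bullet> g) + (norm g)\<^sup>2"
  proof -
    have "u - y0 = (x - y0) - g" by (simp add: g_def)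
    then show ?thesis by (simp only: norm_diff_sq)
  qed
  have e2: "(norm g)\<^sup>2 \<le> 2 * ((x - ystar) \<bullet> g)"
  proof -
    have "norm (u - ystar) \<le> norm (x - ystar)" using ne[of x ystar] fx by (simp add: u_def)
    then have sq: "(norm (u - ystar))\<^sup>2 \<le> (norm (x - ystar))\<^sup>2" by (simp add: power_mono)
    have ueq: "u - ystar = (x - ystar) - g" by (simp add: g_def)
    from sq have "(norm ((x - ystar) - g))\<^sup>2 \<le> (norm (x - ystar))\<^sup>2" by (simp only: ueq)
    then show ?thesis unfolding norm_diff_sq[of "x - ystar" g] by linarith
  qed
  have "real N * (norm g)\<^sup>2 \<le> 2 * (a \<bullet> g)"
  proof -
    have "(x - y0) \<bullet> g + a \<bullet> g = (x - ystar) \<bullet> g" by (simp add: a_def inner_diff_left)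
    moreover have "real N * (norm g)\<^sup>2 \<le> (norm (u - y0))\<^sup>2 - (norm (x - y0))\<^sup>2" using q by (simp add: g_def)
    ultimately show ?thesis using e1 e2 by linarith
  qed
  also have "\<dots> \<le> 2 * (norm a * norm g)" using norm_cauchy_schwarz[of a g] by simp
  finally have k: "real N * (norm g)\<^sup>2 \<le> 2 * (norm a * norm g)" .
  have k2: "real N * norm g \<le> 2 * norm a"
  proof (cases "norm g = 0")
    case True then show ?thesis by simp
  next
    case False
    then have "norm g > 0" by simp
    have "(real N * norm g) * norm g \<le> (2 * norm a) * norm g"
      using k by (simp add: power2_eq_square mult.assoc)
    then show ?thesis using \<open>norm g > 0\<close> by (rule mult_right_le_imp_le)
  qed
  have "(real N * norm g)\<^sup>2 \<le> (2 * norm a)\<^sup>2"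
    by (rule power_mono[OF k2]) simp
  then have "(real N)\<^sup>2 * (norm g)\<^sup>2 \<le> 4 * (norm a)\<^sup>2" by (simp add: power_mult_distrib)
  moreover have "(real N)\<^sup>2 > 0" using assms(3) by simp
  ultimately have "(norm g)\<^sup>2 \<le> 4 * (norm a)\<^sup>2 / (real N)\<^sup>2"
    by (simp add: pos_le_divide_eq) (simp add: mult.commute)
  then show ?thesis by (simp add: g_def u_def x_def y_def a_def)
qed

end
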